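(* Let $n$ be a positive integer, let $f\in C[0,1]$ and $p=P_{\mathcal{P}_n}(f)$. For any $\mu,\gamma\in C^*[0,1]$: (i) if $\mu([0,1])\neq\gamma([0,1])$, then $\gamma\notin\widehat{D}^*P_{\mathcal{P}_n}(f)(\mu)$ and $\mu\notin\widehat{D}^*P_{\mathcal{P}_n}(f)(\gamma)$; (ii) if $\mu([0,1])\neq 0$, then $\theta^*\notin\widehat{D}^*P_{\mathcal{P}_n}(f)(\mu)$ and $\mu\notin\widehat{D}^*P_{\mathcal{P}_n}(f)(\theta^* )$; (iii) if $\langle\gamma,f-p\rangle<0$, then $\gamma\notin\widehat{D}^*P_{\mathcal{P}_n}(f)(\mu)$ for every $\mu\in C^*[0,1]$.
   Context: $C[0,1]$ is the Banach space of continuous real-valued functions on $[0,1]$ with the maximum norm $\|f\|=\max_{0\le t\le 1}|f(t)|$. For a nonnegative integer $n$, $\mathcal{P}_n\subseteq C[0,1]$ denotes the closed subspace of real polynomials of degree at most $n$. The metric projection $P_{\mathcal{P}_n}:C[0,1]\to\mathcal{P}_n$ maps $f$ to the unique $p\in\mathcal{P}_n$ with $\|f-p\|=\min_{q\in\mathcal{P}_n}\|f-q\|$ (it is single-valued and continuous). The dual $C^*[0,1]$ is identified (Riesz representation) with the space of real regular countably additive Borel set functions (signed measures) $\mu$ on $[0,1]$, with pairing $\langle\mu,f\rangle=\int_0^1 f(t)\,\mu(dt)$; $\mu([0,1])$ is the value of $\mu$ on the whole interval, and $\theta^*$ is the zero measure. For $f\in C[0,1]$ and $\mu\in C^*[0,1]$,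 the Mordukhovich derivative (coderivative) of $P_{\mathcal{P}_n}$ at $f$ applied to $\mu$ is the set $$\widehat{D}^*P_{\mathcal{P}_n}(f)(\mu)=\Big\{\varphi\in C^*[0,1]:\ \limsup_{g\to f,\ g\neq f}\frac{\langle\varphi,g-f\rangle-\langle\mu,P_{\mathcal{P}_n}(g)-P_{\mathcal{P}_n}(f)\rangle}{\|g-f\|+\|P_{\mathcal{P}_n}(g)-P_{\mathcal{P}_n}(f)\|}\le 0\Big\}.$$ *)

theory Defs
  imports "HOL-Analysis.Analysis" "HOL-Probability.Probability" "HOL-Computational_Algebra.Polynomial"
begin

text \<open>Elements of C[0,1] are represented canonically as real functions that are
continuous on [0,1] and vanish outside [0,1].\<close>
definition C01 :: "(real \<Rightarrow> real) set" where
  "C01 = {f. continuous_on {0..1} f \<and> (\<forall>t. t \<notin> {0..1} \<longrightarrow> f t = 0)}"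

definition supnorm :: "(real \<Rightarrow> real) \<Rightarrow> real" where
  "supnorm f = (SUP t\<in>{0..1}. \<bar>f t\<bar>)"

definition polys :: "nat \<Rightarrow> (real \<Rightarrow> real) set" where
  "polys n = {g \<in> C01. \<exists>q :: real poly. degree q \<le> n \<and> (\<forall>t\<in>{0..1}. g t = poly q t)}"

definition proj :: "nat \<Rightarrow> (real \<Rightarrow> real) \<Rightarrow> (real \<Rightarrow> real)" where
  "proj n f = (THE p. p \<in> polys n \<and> (\<forall>q\<in>polys n. supnorm (f - p) \<le> supnorm (f - q)))"

text \<open>Dual space C*[0,1]: real signed Borel measures on [0,1], represented as a
difference M1 - M2 of two finite Borel measures on [0,1] (these are automatically regular).\<close>
type_synonym smeasure = "real measure \<times> real measure"

definition dual01 :: "smeasure set" where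
  "dual01 = {(M1, M2). sets M1 = sets (restrict_space borel {0..1}) \<and>
                        sets M2 = sets (restrict_space borel {0..1}) \<and>
                        finite_measure M1 \<and> finite_measure M2}"

definition pairing :: "smeasure \<Rightarrow> (real \<Rightarrow> real) \<Rightarrow> real" where
  "pairing m f = (integral\<^sup>L (fst m) f) - (integral\<^sup>L (snd m) f)"

definition total :: "smeasure \<Rightarrow> real" where
  "total m = measure (fst m) {0..1} - measure (snd m) {0..1}"

definition zero_sm :: smeasure where
  "zero_sm = (null_measure (restrict_space borel {0..1}), null_measure (restrict_space borel {0..1}))"

text \<open>Mordukhovich coderivative of proj n at f applied to mu; the condition
limsup ... <= 0 is written out as: for every eps > 0 the quotient is eventually <= eps.\<close>
definition coderiv :: "nat \<Rightarrow> (real \<Rightarrow> real) \<Rightarrow> smeasure \<Rightarrow> smeasure set" where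
  "coderiv n f \<mu> = {\<phi> \<in> dual01. \<forall>\<epsilon>>0. \<exists>\<delta>>0. \<forall>g\<in>C01. g \<noteq> f \<and> supnorm (g - f) < \<delta> \<longrightarrow>
      (pairing \<phi> (g - f) - pairing \<mu> (proj n g - proj n f)) /
      (supnorm (g - f) + supnorm (proj n g - proj n f)) \<le> \<epsilon>}"

end

theory Submission
  imports Defs
begin

lemma sn_bdd:
  fixes h :: "real \<Rightarrow> real"
  assumes "continuous_on {0..1} h"
  shows "bdd_above ((\<lambda>t. \<bar>h t\<bar>) ` {0..1::real})"
proof -
  have "continuous_on {0..1} (\<lambda>t. \<bar>h t\<bar>)" using assms by (intro continuous_intros)
  then have "compact ((\<lambda>t. \<bar>h t\<bar>) ` {0..1::real})" by (intro compact_continuous_image) auto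
  then show ?thesis by (intro bounded_imp_bdd_above compact_imp_bounded)
qed

lemma sn_ge:
  fixes h :: "real \<Rightarrow> real"
  assumes "continuous_on {0..1} h" "t \<in> {0..1}"
  shows "\<bar>h t\<bar> \<le> supnorm h"
  unfolding supnorm_def using sn_bdd[OF assms(1)] assms(2) by (intro cSUP_upper) auto

lemma sn_le:
  assumes "\<And>t. t \<in> {0..1::real} \<Longrightarrow> \<bar>h t\<bar> \<le> M"
  shows "supnorm h \<le> M"
  unfolding supnorm_def using assms by (intro cSUP_least) auto

lemma sn_att:
  fixes h :: "real \<Rightarrow> real"
  assumes "continuous_on {0..1} h"
  obtains t where "t \<in> {0..1::real}" "\<bar>h t\<bar> = supnorm h"
proof -
  have "continuous_on {0..1} (\<lambda>t. \<bar>h t\<bar>)" using assms by (intro continuous_intros)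
  then obtain x where x: "x \<in> {0..1::real}" "\<forall>y\<in>{0..1}. \<bar>h y\<bar> \<le> \<bar>h x\<bar>"
    using continuous_attains_sup[of "{0..1::real}" "\<lambda>t. \<bar>h t\<bar>"] by auto
  have "supnorm h \<le> \<bar>h x\<bar>" using x(2) by (intro sn_le) auto
  moreover have "\<bar>h x\<bar> \<le> supnorm h" using sn_ge[OF assms x(1)] .
  ultimately show ?thesis using that x(1) by force
qed

lemma sn_nonneg: "continuous_on {0..1} h \<Longrightarrow> 0 \<le> supnorm h"
  using sn_ge[of h 0] by force

lemma sn_cong: "(\<And>t. t \<in> {0..1::real} \<Longrightarrow> h t = k t) \<Longrightarrow> supnorm h = supnorm k"
  unfolding supnorm_def by (intro SUP_cong) auto

lemma sn_scale:
  fixes h :: "real \<Rightarrow> real"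
  assumes "continuous_on {0..1} h"
  shows "supnorm (\<lambda>t. c * h t) = \<bar>c\<bar> * supnorm h"
proof (rule antisym)
  show "supnorm (\<lambda>t. c * h t) \<le> \<bar>c\<bar> * supnorm h"
    by (rule sn_le) (auto simp: abs_mult intro!: mult_left_mono sn_ge[OF assms])
  obtain t where t: "t \<in> {0..1}" "\<bar>h t\<bar> = supnorm h" using sn_att[OF assms] .
  have c: "continuous_on {0..1} (\<lambda>t. c * h t)" using assms by (intro continuous_intros)
  show "\<bar>c\<bar> * supnorm h \<le> supnorm (\<lambda>t. c * h t)"
    using sn_ge[OF c t(1)] t(2) by (simp add: abs_mult)
qed

lemma sn_zero: "supnorm (\<lambda>t. 0) = 0"
  unfolding supnorm_def by simp

lemma C01_cont: "h \<in> C01 \<Longrightarrow> continuous_on {0..1} h"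
  unfolding C01_def by auto

lemma C01_out: "h \<in> C01 \<Longrightarrow> t \<notin> {0..1} \<Longrightarrow> h t = 0"
  unfolding C01_def by auto

lemma C01_lin: "h \<in> C01 \<Longrightarrow> k \<in> C01 \<Longrightarrow> (\<lambda>t. a * h t + b * k t) \<in> C01"
  unfolding C01_def by (auto intro!: continuous_intros)

lemma C01_minus: "h \<in> C01 \<Longrightarrow> k \<in> C01 \<Longrightarrow> h - k \<in> C01"
  unfolding C01_def fun_diff_def by (auto intro!: continuous_intros)

definition pf :: "real poly \<Rightarrow> real \<Rightarrow> real" where
  "pf Q = (\<lambda>t. if t \<in> {0..1} then poly Q t else 0)"

lemma pf_C01: "pf Q \<in> C01"
  unfolding C01_def pf_def
  proof (intro CollectI conjI allI impI)
  show "continuous_on {0..1} (\<lambda>t. if t \<in> {0..1} then poly Q t else 0)"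
    by (rule continuous_on_cong[THEN iffD1, OF refl _ continuous_on_poly[OF continuous_on_id, of _ Q]]) auto
qed auto

lemma polys_iff: "g \<in> polys n \<longleftrightarrow> (\<exists>Q. degree Q \<le> n \<and> g = pf Q)"
proof
  assume "g \<in> polys n"
  then obtain Q where "g \<in> C01" "degree Q \<le> n" "\<forall>t\<in>{0..1}. g t = poly Q t"
    unfolding polys_def by auto
  then have "g = pf Q" unfolding pf_def by (auto simp: C01_out)
  with \<open>degree Q \<le> n\<close> show "\<exists>Q. degree Q \<le> n \<and> g = pf Q" by blast
next
  assume "\<exists>Q. degree Q \<le> n \<and> g = pf Q"
  then show "g \<in> polys n" unfolding polys_def using pf_C01 by (auto simp: pf_def)
qed

lemma polys_C01: "p \<in> polys n \<Longrightarrow> p \<in> C01"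
  unfolding polys_def by auto

lemma polys_lin:
  assumes "p \<in> polys n" "q \<in> polys n"
  shows "(\<lambda>t. a * p t + b * q t) \<in> polys n"
proof -
  obtain P Q where PQ: "degree P \<le> n" "p = pf P" "degree Q \<le> n" "q = pf Q"
    using assms by (auto simp: polys_iff)
  have "(\<lambda>t. a * p t + b * q t) = pf (smult a P + smult b Q)"
    using PQ by (auto simp: pf_def)
  moreover have "degree (smult a P + smult b Q) \<le> n"
    using PQ degree_add_le degree_smult_le order_trans by metis
  ultimately show ?thesis by (auto simp: polys_iff)
qed

lemma poly_roots_zero:
  fixes Q :: "real poly"
  assumes "degree Q \<le> n" "finite A" "card A \<ge> Suc n" "\<And>x. x \<in> A \<Longrightarrow> poly Q x = 0"
  shows "Q = 0"
proof (rule ccontr)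
  assume "Q \<noteq> 0"
  then have "card A \<le> card {x. poly Q x = 0}"
    using assms by (intro card_mono poly_roots_finite) auto
  also have "\<dots> \<le> degree Q" using card_poly_roots_bound[OF \<open>Q \<noteq> 0\<close>] .
  finally show False using assms by simp
qed

definition lag :: "real set \<Rightarrow> real \<Rightarrow> real poly" where
  "lag X x = smult (1 / (\<Prod>y\<in>X-{x}. x - y)) (\<Prod>y\<in>X-{x}. [:-y, 1:])"

lemma lag_self: "finite X \<Longrightarrow> poly (lag X x) x = 1"
  unfolding lag_def by (simp add: poly_prod)

lemma lag_other: "finite X \<Longrightarrow> z \<in> X \<Longrightarrow> z \<noteq> x \<Longrightarrow> poly (lag X x) z = 0"
  unfolding lag_def by (auto simp add: poly_prod prod_zero_iff)

lemma lag_deg: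
  assumes "finite X" "x \<in> X"
  shows "degree (lag X x) \<le> card X - 1"
proof -
  have "degree (\<Prod>y\<in>X-{x}. [:-y, 1:]) \<le> (\<Sum>y\<in>X-{x}. degree [:-y, 1::real:])"
    using degree_prod_sum_le[of "X-{x}" "\<lambda>y. [:-y, 1::real:]"] assms by (simp add: o_def)
  also have "\<dots> = card X - 1" using assms by simp
  finally show ?thesis unfolding lag_def by (meson degree_smult_le order_trans)
qed

definition best :: "nat \<Rightarrow> (real \<Rightarrow> real) \<Rightarrow> (real \<Rightarrow> real) \<Rightarrow> bool" where
  "best n g p \<longleftrightarrow> p \<in> polys n \<and> (\<forall>q\<in>polys n. supnorm (g - p) \<le> supnorm (g - q))"

lemma extremal_many:
  assumes g: "g \<in> C01" and b: "best n g p" and E: "E = supnorm (g - p)" "E > 0"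
    and X: "X = {t\<in>{0..1}. \<bar>g t - p t\<bar> = E}"
  shows "\<not> (finite X \<and> card X \<le> n)"
proof
  assume fX: "finite X \<and> card X \<le> n"
  have p: "p \<in> polys n" using b unfolding best_def by auto
  define r where "r = g - p"
  have rc: "continuous_on {0..1} r" unfolding r_def using C01_minus[OF g polys_C01[OF p]] by (rule C01_cont)
  have rt: "r t = g t - p t" for t unfolding r_def by simp
  obtain t0 where t0: "t0 \<in> {0..1}" "\<bar>r t0\<bar> = E" using sn_att[OF rc] E unfolding r_def by metis
  have rle: "\<bar>r t\<bar> \<le> E" if "t \<in> {0..1}" for t using sn_ge[OF rc that] E r_def by simp
  define h where "h = (\<Sum>x\<in>X. smult (r x) (lag X x))"
  have hX: "poly h z = r z" if "z \<in> X" for z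
  proof -
    have "poly h z = (\<Sum>x\<in>X. r x * poly (lag X x) z)" unfolding h_def by (simp add: poly_sum)
    also have "\<dots> = r z * poly (lag X z) z + (\<Sum>x\<in>X-{z}. r x * poly (lag X x) z)"
      using fX that by (simp add: sum.remove)
    also have "\<dots> = r z" using fX that by (simp add: lag_self lag_other)
    finally show ?thesis .
  qed
  have hdeg: "degree h \<le> n"
    unfolding h_def
  proof (rule degree_sum_le)
    fix x assume "x \<in> X"
    then have "degree (lag X x) \<le> n" using lag_deg[of X x] fX by auto
    then show "degree (smult (r x) (lag X x)) \<le> n" by (meson degree_smult_le order_trans)
  qed (use fX in auto)
  have hc: "continuous_on {0..1} (poly h)" by (intro continuous_intros)
  obtain H where H: "H > 0" "\<And>t. t \<in> {0..1} \<Longrightarrow> \<bar>poly h t\<bar> \<le> H"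
  proof -
    have "continuous_on {0..1} (pf h)" using pf_C01 by (rule C01_cont)
    then show ?thesis
      using that[of "supnorm (pf h) + 1"] sn_ge[of "pf h"] sn_nonneg[of "pf h"]
      by (force simp: pf_def)
  qed
  define K where "K = {0..1} \<inter> (\<lambda>t. r t * poly h t) -` {..E^2/2}"
  have "closed K" unfolding K_def
    by (rule continuous_closed_preimage) (use rc hc in \<open>auto intro!: continuous_intros\<close>)
  moreover have "K \<subseteq> {0..1}" unfolding K_def by auto
  ultimately have cK: "compact K" by (meson compact_Icc compact_imp_bounded bounded_subset compact_eq_bounded_closed)
  have Kr: "\<bar>r t\<bar> < E" if "t \<in> K" for t
  proof -
    have t: "t \<in> {0..1}" "r t * poly h t \<le> E^2/2" using that unfolding K_def by auto
    show ?thesis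
    proof (rule ccontr)
      assume "\<not> \<bar>r t\<bar> < E"
      then have "\<bar>r t\<bar> = E" using rle[OF t(1)] by simp
      then have "t \<in> X" using t(1) X by (simp add: rt)
      then have "r t * poly h t = E^2" using hX \<open>\<bar>r t\<bar> = E\<close>
        by (metis abs_mult_self_eq power2_eq_square)
      then show False using t(2) E(2) by (simp add: power2_eq_square)
    qed
  qed
  obtain E' where E': "E' < E" "\<And>t. t \<in> K \<Longrightarrow> \<bar>r t\<bar> \<le> E'"
  proof (cases "K = {}")
    case True then show ?thesis using that[of 0] E by auto
  next
    case False
    have "continuous_on K (\<lambda>t. \<bar>r t\<bar>)"
      by (rule continuous_on_subset[of "{0..1}"]) (use rc in \<open>auto intro!: continuous_intros simp: K_def\<close>)
    then obtain t1 where "t1 \<in> K" "\<forall>y\<in>K. \<bar>r y\<bar> \<le> \<bar>r t1\<bar>"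
      using continuous_attains_sup[OF cK False] by blast
    then show ?thesis using that[of "\<bar>r t1\<bar>"] Kr by auto
  qed
  define l where "l = min (E - E') E / (2 * H)"
  have l: "l > 0" "l * H < E - E'" "l * H < E"
    using H(1) E' E(2) by (auto simp: l_def field_simps min_def)
  define q' where "q' = (\<lambda>t. 1 * p t + l * pf h t)"
  have q'p: "q' \<in> polys n" unfolding q'_def
    by (rule polys_lin[OF p]) (use hdeg in \<open>auto simp: polys_iff\<close>)
  have q'c: "continuous_on {0..1} (g - q')"
    using C01_minus[OF g polys_C01[OF q'p]] by (rule C01_cont)
  have less: "\<bar>(g - q') t\<bar> < E" if t: "t \<in> {0..1}" for t
  proof -
    have eq: "(g - q') t = r t - l * poly h t" using t by (simp add: q'_def pf_def rt)
    have hH: "\<bar>poly h t\<bar> \<le> H" using H(2)[OF t] .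
    have lh: "\<bar>l * poly h t\<bar> \<le> l * H" using hH l(1) by (simp add: abs_mult)
    show ?thesis
    proof (cases "t \<in> K")
      case True
      then show ?thesis using E'(2)[OF True] lh l(2) eq by linarith
    next
      case False
      then have pos: "r t * poly h t > E^2/2" using t unfolding K_def by auto
      then have pos0: "r t * poly h t > 0" using E(2) by (smt (verit) half_gt_zero zero_less_power)
      have "0 < l * poly h t \<and> 0 < r t \<or> l * poly h t < 0 \<and> r t < 0"
        using pos0 l(1) by (auto simp: zero_less_mult_iff mult_less_0_iff)
      then show ?thesis using eq rle[OF t] lh l(3) by linarith
    qed
  qed
  obtain t2 where t2: "t2 \<in> {0..1}" "\<bar>(g - q') t2\<bar> = supnorm (g - q')" using sn_att[OF q'c] .
  have "supnorm (g - p) \<le> supnorm (g - q')" using b q'p unfolding best_def by auto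
  then show False using less[OF t2(1)] t2(2) E by linarith
qed

lemma best_unique:
  assumes g: "g \<in> C01" and b1: "best n g p1" and b2: "best n g p2"
  shows "p1 = p2"
proof -
  have p1: "p1 \<in> polys n" and p2: "p2 \<in> polys n" using b1 b2 unfolding best_def by auto
  define E where "E = supnorm (g - p1)"
  have E2: "E = supnorm (g - p2)" using b1 b2 p1 p2 unfolding best_def E_def by (auto intro: antisym)
  have c1: "continuous_on {0..1} (g - p1)" using C01_minus[OF g polys_C01[OF p1]] by (rule C01_cont)
  have c2: "continuous_on {0..1} (g - p2)" using C01_minus[OF g polys_C01[OF p2]] by (rule C01_cont)
  have le1: "\<bar>g t - p1 t\<bar> \<le> E" if "t \<in> {0..1}" for t using sn_ge[OF c1 that] E_def by simp
  have le2: "\<bar>g t - p2 t\<bar> \<le> E" if "t \<in> {0..1}" for t using sn_ge[OF c2 that] E2 by simp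
  have E0: "E \<ge> 0" using sn_nonneg[OF c1] E_def by simp
  have eqout: "p1 t = p2 t" if "t \<notin> {0..1}" for t
    using C01_out[OF polys_C01[OF p1] that] C01_out[OF polys_C01[OF p2] that] by simp
  show ?thesis
  proof (cases "E = 0")
    case True
    show ?thesis
    proof
      fix t show "p1 t = p2 t"
        using le1[of t] le2[of t] True eqout[of t] by (cases "t \<in> {0..1}") auto
    qed
  next
    case False
    then have Epos: "E > 0" using E0 by simp
    define pm where "pm = (\<lambda>t. (1/2) * p1 t + (1/2) * p2 t)"
    have pm: "pm \<in> polys n" unfolding pm_def by (rule polys_lin[OF p1 p2])
    have "supnorm (g - pm) \<le> E"
    proof (rule sn_le)
      fix t :: real assume t: "t \<in> {0..1}"
      show "\<bar>(g - pm) t\<bar> \<le> E" using le1[OF t] le2[OF t] by (simp add: pm_def abs_le_iff)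
    qed
    moreover have "E \<le> supnorm (g - pm)" using b1 pm unfolding best_def E_def by auto
    ultimately have Em: "E = supnorm (g - pm)" by simp
    have bm: "best n g pm" using b1 pm Em unfolding best_def E_def by auto
    define X where "X = {t\<in>{0..1}. \<bar>g t - pm t\<bar> = E}"
    have nX: "\<not> (finite X \<and> card X \<le> n)" using extremal_many[OF g bm Em Epos X_def] .
    obtain A where A: "finite A" "card A = Suc n" "A \<subseteq> X"
    proof (cases "finite X")
      case True
      then have "Suc n \<le> card X" using nX by simp
      then show ?thesis using that obtain_subset_with_card_n by metis
    next
      case False
      then show ?thesis using that infinite_arbitrarily_large by metis
    qed
    have eqX: "p1 t = p2 t" if "t \<in> X" for t
    proof -
      have t: "t \<in> {0..1}" "\<bar>g t - pm t\<bar> = E" using that X_def by auto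
      then show ?thesis using le1[OF t(1)] le2[OF t(1)] unfolding pm_def by (auto simp: abs_if split: if_splits)
    qed
    obtain P1 P2 where P: "degree P1 \<le> n" "p1 = pf P1" "degree P2 \<le> n" "p2 = pf P2"
      using p1 p2 by (auto simp: polys_iff)
    have "P1 - P2 = 0"
    proof (rule poly_roots_zero[OF _ A(1)])
      show "degree (P1 - P2) \<le> n" using P degree_diff_le by blast
      show "Suc n \<le> card A" using A by simp
      fix x assume "x \<in> A"
      then have "x \<in> X" "x \<in> {0..1}" using A X_def by auto
      then show "poly (P1 - P2) x = 0" using eqX[of x] P by (simp add: pf_def)
    qed
    then show ?thesis using P by simp
  qed
qed

lemma best_ex:
  assumes g: "g \<in> C01"
  shows "\<exists>p. best n g p"
proof -
  define node where "node = (\<lambda>i::nat. real i / real (Suc n))"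
  define X where "X = node ` {..n}"
  have inj: "inj_on node {..n}" unfolding node_def by (auto simp: inj_on_def)
  have fX: "finite X" and cX: "card X = Suc n" unfolding X_def using inj by (auto simp: card_image)
  have node01: "node i \<in> {0..1}" if "i \<le> n" for i using that by (auto simp: node_def field_simps)
  define L where "L = (\<lambda>i. lag X (node i))"
  define Phi where "Phi = (\<lambda>v::nat \<Rightarrow> real. \<Sum>i\<le>n. smult (v i) (L i))"
  have Ldeg: "degree (L i) \<le> n" if "i \<le> n" for i
    using lag_deg[OF fX, of "node i"] that cX unfolding L_def X_def by auto
  have Phideg: "degree (Phi v) \<le> n" for v
    unfolding Phi_def by (rule degree_sum_le) (auto intro: order_trans[OF degree_smult_le] Ldeg)
  have Lnode: "poly (L i) (node j) = (if i = j then 1 else 0)" if "i \<le> n" "j \<le> n" for i j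
  proof (cases "i = j")
    case True then show ?thesis by (simp add: L_def lag_self[OF fX])
  next
    case False
    then have "node j \<noteq> node i" using inj that by (auto dest: inj_onD)
    moreover have "node j \<in> X" using that unfolding X_def by auto
    ultimately show ?thesis using False unfolding L_def by (simp add: lag_other[OF fX])
  qed
  have Phinode: "poly (Phi v) (node j) = v j" if "j \<le> n" for v j
  proof -
    have "poly (Phi v) (node j) = (\<Sum>i\<le>n. v i * poly (L i) (node j))"
      by (simp add: Phi_def poly_sum)
    also have "\<dots> = (\<Sum>i\<le>n. if i = j then v i else 0)"
      by (rule sum.cong) (use that Lnode in auto)
    also have "\<dots> = v j" using that by simp
    finally show ?thesis .
  qed
  have interp: "Phi (\<lambda>i. poly Q (node i)) = Q" if "degree Q \<le> n" for Q
  proof -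
    have "Q - Phi (\<lambda>i. poly Q (node i)) = 0"
    proof (rule poly_roots_zero[OF _ fX])
      show "degree (Q - Phi (\<lambda>i. poly Q (node i))) \<le> n"
        using that Phideg degree_diff_le by blast
      show "Suc n \<le> card X" using cX by simp
      fix x assume "x \<in> X"
      then obtain j where "j \<le> n" "x = node j" unfolding X_def by auto
      then show "poly (Q - Phi (\<lambda>i. poly Q (node i))) x = 0" using Phinode by simp
    qed
    then show ?thesis by simp
  qed
  obtain B where B: "B \<ge> 0" "\<And>t i. t \<in> {0..1} \<Longrightarrow> i \<le> n \<Longrightarrow> \<bar>poly (L i) t\<bar> \<le> B"
  proof -
    have c: "continuous_on {0..1} (pf (L i))" for i using pf_C01 by (rule C01_cont)
    define B where "B = (\<Sum>i\<le>n. supnorm (pf (L i)))"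
    have "\<bar>poly (L i) t\<bar> \<le> B" if "t \<in> {0..1}" "i \<le> n" for t i
    proof -
      have "\<bar>poly (L i) t\<bar> \<le> supnorm (pf (L i))" using sn_ge[OF c that(1)] that by (simp add: pf_def)
      also have "\<dots> \<le> B" unfolding B_def
        by (rule member_le_sum) (use that sn_nonneg[OF c] in auto)
      finally show ?thesis .
    qed
    moreover have "B \<ge> 0" unfolding B_def by (rule sum_nonneg) (use sn_nonneg[OF c] in auto)
    ultimately show ?thesis using that by blast
  qed
  define F where "F = (\<lambda>v. supnorm (g - pf (Phi v)))"
  have Fc: "continuous_on {0..1} (g - pf (Phi v))" for v
    using C01_minus[OF g pf_C01] by (rule C01_cont)
  have Fle: "F v \<le> F w + B * (\<Sum>i\<le>n. \<bar>v i - w i\<bar>)" for v w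
    unfolding F_def
  proof (rule sn_le)
    fix t :: real assume t: "t \<in> {0..1}"
    have "\<bar>poly (Phi v) t - poly (Phi w) t\<bar> = \<bar>\<Sum>i\<le>n. (v i - w i) * poly (L i) t\<bar>"
      by (simp add: Phi_def poly_sum sum_subtractf[symmetric] algebra_simps)
    also have "\<dots> \<le> (\<Sum>i\<le>n. \<bar>v i - w i\<bar> * B)"
      by (rule order_trans[OF sum_abs]) (auto simp: abs_mult intro!: sum_mono mult_left_mono B(2)[OF t])
    finally have d: "\<bar>poly (Phi v) t - poly (Phi w) t\<bar> \<le> B * (\<Sum>i\<le>n. \<bar>v i - w i\<bar>)"
      by (simp add: sum_distrib_left mult.commute)
    have "\<bar>(g - pf (Phi w)) t\<bar> \<le> supnorm (g - pf (Phi w))" by (rule sn_ge[OF Fc t])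
    then show "\<bar>(g - pf (Phi v)) t\<bar> \<le> supnorm (g - pf (Phi w)) + B * (\<Sum>i\<le>n. \<bar>v i - w i\<bar>)"
      using d t by (simp add: pf_def)
  qed
  have Fcont: "continuous_on UNIV F"
  proof (rule continuous_at_imp_continuous_on, intro ballI)
    fix w :: "nat \<Rightarrow> real"
    have sc: "continuous_on UNIV (\<lambda>v::nat\<Rightarrow>real. B * (\<Sum>i\<le>n. \<bar>v i - w i\<bar>))"
      by (intro continuous_on_mult continuous_on_const continuous_on_sum continuous_on_rabs continuous_on_diff continuous_on_product_coordinates)
    then have "isCont (\<lambda>v::nat\<Rightarrow>real. B * (\<Sum>i\<le>n. \<bar>v i - w i\<bar>)) w"
      using open_UNIV continuous_on_eq_continuous_at by blast
    then have "((\<lambda>v. B * (\<Sum>i\<le>n. \<bar>v i - w i\<bar>)) \<longlongrightarrow> B * (\<Sum>i\<le>n. \<bar>w i - w i\<bar>)) (at w)"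
      unfolding isCont_def .
    then have t0: "((\<lambda>v. B * (\<Sum>i\<le>n. \<bar>v i - w i\<bar>)) \<longlongrightarrow> 0) (at w)" by simp
    have "((\<lambda>v. F v - F w) \<longlongrightarrow> 0) (at w)"
    proof (rule Lim_null_comparison[OF _ t0], rule always_eventually, rule allI)
      fix v
      show "norm (F v - F w) \<le> B * (\<Sum>i\<le>n. \<bar>v i - w i\<bar>)"
        using Fle[of v w] Fle[of w v] by (simp add: abs_minus_commute)
    qed
    then have "(F \<longlongrightarrow> F w) (at w)" by (simp add: LIM_zero_iff)
    then show "isCont F w" by (simp add: isCont_def)
  qed
  define R where "R = 2 * supnorm g"
  have gc: "continuous_on {0..1} g" using g by (rule C01_cont)
  have R0: "R \<ge> 0" unfolding R_def using sn_nonneg[OF gc] by simp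
  define S where "S = PiE UNIV (\<lambda>i::nat. if i \<le> n then {-R..R} else {0::real})"
  have cS: "compact S"
  proof -
    have "compactin (product_topology (\<lambda>i. euclidean) UNIV) S"
      unfolding S_def by (subst compactin_PiE) auto
    then show ?thesis by (simp add: euclidean_product_topology)
  qed
  have zS: "(\<lambda>_. 0) \<in> S" unfolding S_def using R0 by auto
  obtain v0 where v0: "v0 \<in> S" "\<And>v. v \<in> S \<Longrightarrow> F v0 \<le> F v"
    using continuous_attains_inf[OF cS _ continuous_on_subset[OF Fcont]] zS by blast
  have F0: "F (\<lambda>_. 0) = supnorm g" unfolding F_def Phi_def by (rule sn_cong) (simp add: pf_def)
  have "best n g (pf (Phi v0))"
    unfolding best_def
  proof (intro conjI ballI)
    show "pf (Phi v0) \<in> polys n" using Phideg by (auto simp: polys_iff)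
    fix q assume "q \<in> polys n"
    then obtain Q where Q: "degree Q \<le> n" "q = pf Q" by (auto simp: polys_iff)
    have qc: "continuous_on {0..1} (g - q)" using C01_cont[OF C01_minus[OF g pf_C01[of Q]]] Q(2) by simp
    show "supnorm (g - pf (Phi v0)) \<le> supnorm (g - q)"
    proof (cases "supnorm (g - q) \<le> supnorm g")
      case True
      define v where "v = (\<lambda>i. if i \<le> n then poly Q (node i) else 0)"
      have Pv: "Phi v = Q" using interp[OF Q(1)] unfolding Phi_def v_def by simp
      have "v \<in> S" unfolding S_def v_def
      proof (intro PiE_I)
        fix i show "(if i \<le> n then poly Q (node i) else 0) \<in> (if i \<le> n then {-R..R} else {0})"
        proof (cases "i \<le> n")
          case True
          have t: "node i \<in> {0..1}" using node01[OF True] .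
          have "\<bar>g (node i)\<bar> \<le> supnorm g" using sn_ge[OF gc t] .
          moreover have "\<bar>g (node i) - q (node i)\<bar> \<le> supnorm (g - q)" using sn_ge[OF qc t] by simp
          moreover have "q (node i) = poly Q (node i)" using Q(2) t by (simp add: pf_def)
          ultimately have "\<bar>poly Q (node i)\<bar> \<le> R" using \<open>supnorm (g - q) \<le> supnorm g\<close> unfolding R_def
            by linarith
          then show ?thesis using True by auto
        qed auto
      qed auto
      then show ?thesis using v0(2)[of v] Pv Q(2) unfolding F_def by simp
    next
      case False
      then show ?thesis using v0(2)[OF zS] F0 unfolding F_def by simp
    qed
  qed
  then show ?thesis by blast
qed

lemma proj_best: "g \<in> C01 \<Longrightarrow> best n g (proj n g)"
proof -
  assume g: "g \<in> C01"
  have "\<exists>!p. best n g p" using best_ex[OF g] best_unique[OF g] by blast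
  then show ?thesis unfolding proj_def best_def[symmetric] by (rule theI')
qed

lemma proj_eq: "g \<in> C01 \<Longrightarrow> best n g p \<Longrightarrow> proj n g = p"
  using proj_best best_unique by blast

lemma proj_affine:
  assumes g: "g \<in> C01" and q: "q \<in> polys n" and a: "a \<noteq> 0"
  shows "proj n (\<lambda>t. a * g t + q t) = (\<lambda>t. a * proj n g t + q t)"
proof (rule proj_eq)
  have qC: "q \<in> C01" using polys_C01[OF q] .
  show G: "(\<lambda>t. a * g t + q t) \<in> C01" using C01_lin[OF g qC, of a 1] by simp
  define p where "p = proj n g"
  have bp: "best n g p" unfolding p_def by (rule proj_best[OF g])
  have pp: "p \<in> polys n" using bp unfolding best_def by auto
  have gpc: "continuous_on {0..1} (g - p)" using C01_cont[OF C01_minus[OF g polys_C01[OF pp]]] .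
  show "best n (\<lambda>t. a * g t + q t) (\<lambda>t. a * proj n g t + q t)"
    unfolding best_def p_def[symmetric]
  proof (intro conjI ballI)
    show "(\<lambda>t. a * p t + q t) \<in> polys n" using polys_lin[OF pp q, of a 1] by simp
    fix q' assume q': "q' \<in> polys n"
    define w where "w = (\<lambda>t. (1/a) * q' t + (-1/a) * q t)"
    have wp: "w \<in> polys n" unfolding w_def by (rule polys_lin[OF q' q])
    have gwc: "continuous_on {0..1} (g - w)" using C01_cont[OF C01_minus[OF g polys_C01[OF wp]]] .
    have "supnorm ((\<lambda>t. a * g t + q t) - (\<lambda>t. a * p t + q t)) = supnorm (\<lambda>t. a * (g - p) t)"
      by (rule sn_cong) (simp add: algebra_simps)
    also have "\<dots> = \<bar>a\<bar> * supnorm (g - p)" by (rule sn_scale[OF gpc])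
    also have "\<dots> \<le> \<bar>a\<bar> * supnorm (g - w)" using bp wp unfolding best_def by (auto intro: mult_left_mono)
    also have "\<dots> = supnorm (\<lambda>t. a * (g - w) t)" by (rule sn_scale[OF gwc, symmetric])
    also have "\<dots> = supnorm ((\<lambda>t. a * g t + q t) - q')"
      by (rule sn_cong) (use a in \<open>simp add: w_def algebra_simps\<close>)
    finally show "supnorm ((\<lambda>t. a * g t + q t) - (\<lambda>t. a * p t + q t)) \<le> supnorm ((\<lambda>t. a * g t + q t) - q')" .
  qed
qed

definition c1 :: "real \<Rightarrow> real" where "c1 = (\<lambda>t. if t \<in> {0..1} then 1 else 0)"

lemma c1_polys: "c1 \<in> polys n"
proof -
  have "c1 = pf [:1:]" unfolding c1_def pf_def by (rule ext) simp
  then show ?thesis unfolding polys_iff by (intro exI[of _ "[:1:]"]) simp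
qed

lemma c1_sn: "supnorm (\<lambda>t. s * c1 t) = \<bar>s\<bar>"
proof -
  have "supnorm (\<lambda>t. s * c1 t) = supnorm (\<lambda>t. \<bar>s\<bar>)" unfolding supnorm_def
    by (intro SUP_cong) (auto simp: c1_def)
  then show ?thesis unfolding supnorm_def by simp
qed

lemma dual_space:
  assumes "m \<in> dual01"
  shows "space (fst m) = {0..1}" "space (snd m) = {0..1}"
  using assms unfolding dual01_def
  by (auto dest!: sets_eq_imp_space_eq simp: space_restrict_space)

lemma pairing_c1:
  assumes "m \<in> dual01"
  shows "pairing m (\<lambda>t. s * c1 t) = s * total m"
proof -
  have I: "integral\<^sup>L M c1 = measure M {0..1}" if "space M = {0..1}" for M :: "real measure"
  proof -
    have "integral\<^sup>L M c1 = integral\<^sup>L M (\<lambda>t. 1)"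
      by (rule Bochner_Integration.integral_cong) (use that in \<open>auto simp: c1_def\<close>)
    then show ?thesis using that by simp
  qed
  have "pairing m (\<lambda>t. s * c1 t) = s * pairing m c1" unfolding pairing_def by (simp add: algebra_simps)
  also have "pairing m c1 = total m" unfolding pairing_def total_def using I dual_space[OF assms] by simp
  finally show ?thesis .
qed

lemma pairing_scale: "pairing m (\<lambda>t. c * h t) = c * pairing m h"
  unfolding pairing_def by (simp add: algebra_simps)

lemma pairing_zero: "pairing m (\<lambda>t. 0) = 0"
  unfolding pairing_def by simp

lemma zero_sm_dual: "zero_sm \<in> dual01"
  unfolding zero_sm_def dual01_def by (auto intro!: finite_measureI)

lemma total_zero: "total zero_sm = 0"
  unfolding zero_sm_def total_def by simp

lemma L1:
  assumes f: "f \<in> C01" and phi: "\<phi> \<in> dual01" and mu: "\<mu> \<in> dual01" and ne: "total \<phi> \<noteq> total \<mu>"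
  shows "\<phi> \<notin> coderiv n f \<mu>"
proof
  assume "\<phi> \<in> coderiv n f \<mu>"
  define D where "D = total \<phi> - total \<mu>"
  have D: "\<bar>D\<bar> > 0" using ne D_def by simp
  obtain \<delta> where \<delta>: "\<delta> > 0" and H: "\<And>g. g \<in> C01 \<Longrightarrow> g \<noteq> f \<and> supnorm (g - f) < \<delta> \<Longrightarrow>
      (pairing \<phi> (g - f) - pairing \<mu> (proj n g - proj n f)) /
      (supnorm (g - f) + supnorm (proj n g - proj n f)) \<le> \<bar>D\<bar>/4"
  proof -
    have all: "\<forall>\<epsilon>>0. \<exists>\<delta>>0. \<forall>g\<in>C01. g \<noteq> f \<and> supnorm (g - f) < \<delta> \<longrightarrow>
      (pairing \<phi> (g - f) - pairing \<mu> (proj n g - proj n f)) /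
      (supnorm (g - f) + supnorm (proj n g - proj n f)) \<le> \<epsilon>"
      using \<open>\<phi> \<in> coderiv n f \<mu>\<close> unfolding coderiv_def by blast
    have "\<bar>D\<bar>/4 > 0" using D by simp
    then obtain \<delta> where "\<delta> > 0" "\<forall>g\<in>C01. g \<noteq> f \<and> supnorm (g - f) < \<delta> \<longrightarrow>
      (pairing \<phi> (g - f) - pairing \<mu> (proj n g - proj n f)) /
      (supnorm (g - f) + supnorm (proj n g - proj n f)) \<le> \<bar>D\<bar>/4"
      using all by blast
    then show ?thesis using that by blast
  qed
  define s where "s = \<delta>/2 * sgn D"
  have Dne: "D \<noteq> 0" using D by simp
  have s1: "\<bar>s\<bar> = \<delta>/2" using \<delta> Dne unfolding s_def by (simp add: abs_mult sgn_if)
  have s2: "s * D = \<delta>/2 * \<bar>D\<bar>" using Dne unfolding s_def by (simp add: sgn_if abs_if)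
  have s3: "s \<noteq> 0" using s1 \<delta> by auto
  note s = s1 s2 s3
  define g where "g = (\<lambda>t. 1 * f t + s * c1 t)"
  have gC: "g \<in> C01" unfolding g_def by (rule C01_lin[OF f polys_C01[OF c1_polys]])
  have pg: "proj n g = (\<lambda>t. 1 * proj n f t + s * c1 t)" unfolding g_def
    using proj_affine[OF f _ one_neq_zero, of "\<lambda>t. s * c1 t" n] polys_lin[OF c1_polys c1_polys, of s 0 n] by simp
  have gf: "g - f = (\<lambda>t. s * c1 t)" unfolding g_def by auto
  have pgf: "proj n g - proj n f = (\<lambda>t. s * c1 t)" unfolding pg by auto
  have "(g - f) 0 \<noteq> 0" using gf s(3) by (simp add: c1_def)
  then have "g \<noteq> f" by auto
  moreover have "supnorm (g - f) < \<delta>" using gf c1_sn s(1) \<delta> by simp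
  ultimately have le: "(s * total \<phi> - s * total \<mu>) / (\<bar>s\<bar> + \<bar>s\<bar>) \<le> \<bar>D\<bar>/4"
    using H[OF gC] unfolding gf pgf c1_sn pairing_c1[OF phi] pairing_c1[OF mu] by simp
  have num: "s * total \<phi> - s * total \<mu> = \<delta>/2 * \<bar>D\<bar>"
    using s(2) unfolding D_def by (simp add: right_diff_distrib)
  have den: "\<bar>s\<bar> + \<bar>s\<bar> = \<delta>" using s(1) by simp
  have "(s * total \<phi> - s * total \<mu>) / (\<bar>s\<bar> + \<bar>s\<bar>) = \<bar>D\<bar>/2"
    unfolding num den using \<delta> by simp
  then show False using le D by linarith
qed

lemma L3:
  assumes f: "f \<in> C01" and neg: "pairing \<gamma> (f - proj n f) < 0"
  shows "\<gamma> \<notin> coderiv n f \<nu>"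
proof
  assume "\<gamma> \<in> coderiv n f \<nu>"
  define p where "p = proj n f"
  have pp: "p \<in> polys n" using proj_best[OF f] unfolding p_def best_def by auto
  define d where "d = f - p"
  have dC: "d \<in> C01" unfolding d_def by (rule C01_minus[OF f polys_C01[OF pp]])
  define Dn where "Dn = supnorm d"
  have Dpos: "Dn > 0"
  proof (rule ccontr)
    assume "\<not> Dn > 0"
    then have "\<bar>d t\<bar> \<le> 0" for t
      using sn_ge[OF C01_cont[OF dC], of t] C01_out[OF dC, of t] unfolding Dn_def by (cases "t \<in> {0..1}") auto
    then have "d = (\<lambda>t. 0)" by (auto simp: fun_eq_iff)
    then show False using neg pairing_zero unfolding d_def p_def by simp
  qed
  define c where "c = - pairing \<gamma> d / Dn"
  have c: "c > 0" using neg Dpos unfolding c_def d_def p_def by (simp add: field_simps)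
  obtain \<delta> where \<delta>: "\<delta> > 0" and H: "\<And>g. g \<in> C01 \<Longrightarrow> g \<noteq> f \<and> supnorm (g - f) < \<delta> \<Longrightarrow>
      (pairing \<gamma> (g - f) - pairing \<nu> (proj n g - proj n f)) /
      (supnorm (g - f) + supnorm (proj n g - proj n f)) \<le> c/2"
  proof -
    have all: "\<forall>\<epsilon>>0. \<exists>\<delta>>0. \<forall>g\<in>C01. g \<noteq> f \<and> supnorm (g - f) < \<delta> \<longrightarrow>
      (pairing \<gamma> (g - f) - pairing \<nu> (proj n g - proj n f)) /
      (supnorm (g - f) + supnorm (proj n g - proj n f)) \<le> \<epsilon>"
      using \<open>\<gamma> \<in> coderiv n f \<nu>\<close> unfolding coderiv_def by blast
    have "c/2 > 0" using c by simp
    then obtain \<delta> where "\<delta> > 0" "\<forall>g\<in>C01. g \<noteq> f \<and> supnorm (g - f) < \<delta> \<longrightarrow>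
      (pairing \<gamma> (g - f) - pairing \<nu> (proj n g - proj n f)) /
      (supnorm (g - f) + supnorm (proj n g - proj n f)) \<le> c/2"
      using all by blast
    then show ?thesis using that by blast
  qed
  define s where "s = min (1/2) (\<delta> / (2 * Dn))"
  have s: "s > 0" "s < 1" "s * Dn < \<delta>" using \<delta> Dpos
    by (auto simp: s_def min_def field_simps)
  define g where "g = (\<lambda>t. (1 - s) * f t + s * p t)"
  have gC: "g \<in> C01" unfolding g_def by (rule C01_lin[OF f polys_C01[OF pp]])
  have pg: "proj n g = p"
  proof -
    have "proj n g = (\<lambda>t. (1 - s) * p t + s * p t)" unfolding g_def p_def
      using proj_affine[OF f _, of "\<lambda>t. s * proj n f t" n "1 - s"] polys_lin[OF pp pp, of s 0] s(2)
      unfolding p_def by simp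
    then show ?thesis by (simp add: algebra_simps)
  qed
  have gf: "g - f = (\<lambda>t. (-s) * d t)" unfolding g_def d_def by (auto simp: algebra_simps)
  have pgf: "proj n g - proj n f = (\<lambda>t. 0)" unfolding pg p_def by auto
  have sng: "supnorm (g - f) = s * Dn" unfolding gf sn_scale[OF C01_cont[OF dC]] Dn_def using s by simp
  have "g \<noteq> f"
  proof
    assume "g = f"
    then have "s * Dn = 0" using sng by (simp add: supnorm_def)
    then show False using s Dpos by simp
  qed
  then have le: "((-s) * pairing \<gamma> d - 0) / (s * Dn + 0) \<le> c/2"
    using H[OF gC] s sng unfolding gf pgf pairing_scale pairing_zero sn_zero by simp
  have "((-s) * pairing \<gamma> d - 0) / (s * Dn + 0) = c" using s Dpos unfolding c_def by (simp add: field_simps)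
  then show False using le c by simp
qed

theorem theorem5p1:
  fixes n :: nat and f :: "real \<Rightarrow> real" and \<mu> \<gamma> :: smeasure
  assumes "n \<ge> 1" and "f \<in> C01" and "\<mu> \<in> dual01" and "\<gamma> \<in> dual01"
  shows "(total \<mu> \<noteq> total \<gamma> \<longrightarrow>
            \<gamma> \<notin> coderiv n f \<mu> \<and> \<mu> \<notin> coderiv n f \<gamma>)
       \<and> (total \<mu> \<noteq> 0 \<longrightarrow>
            zero_sm \<notin> coderiv n f \<mu> \<and> \<mu> \<notin> coderiv n f zero_sm)
       \<and> (pairing \<gamma> (f - proj n f) < 0 \<longrightarrow>
            (\<forall>\<nu>\<in>dual01. \<gamma> \<notin> coderiv n f \<nu>))"
proof (intro conjI impI)
  assume "total \<mu> \<noteq> total \<gamma>"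
  then show "\<gamma> \<notin> coderiv n f \<mu>" "\<mu> \<notin> coderiv n f \<gamma>"
    using L1[OF assms(2) assms(4) assms(3)] L1[OF assms(2) assms(3) assms(4)] by auto
next
  assume "total \<mu> \<noteq> 0"
  then show "zero_sm \<notin> coderiv n f \<mu>" "\<mu> \<notin> coderiv n f zero_sm"
    using L1[OF assms(2) zero_sm_dual assms(3)] L1[OF assms(2) assms(3) zero_sm_dual] total_zero by auto
next
  assume "pairing \<gamma> (f - proj n f) < 0"
  then show "\<forall>\<nu>\<in>dual01. \<gamma> \<notin> coderiv n f \<nu>" using L3[OF assms(2)] by blast
qed

end
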